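(* Let $F_1,\dots,F_n$ be distributions of independent nonnegative random variables $v_1,\dots,v_n$ with finite expectations, and let $\phi=\frac{1+\sqrt5}{2}$ be the golden ratio. Let $\textsf{ALG}$ be the order-unaware algorithm defined in the context below. Then for every arrival order $\pi$ of the $n$ boxes, $$\textsf{ALG}(\pi)\ \ge\ \frac{1}{\phi}\,\textsf{OPT}(\pi),$$ where $\textsf{ALG}(\pi)$ and $\textsf{OPT}(\pi)$ denote the expected value accepted by $\textsf{ALG}$ and by the best order-aware online algorithm, respectively, when the boxes arrive in order $\pi$.
   Context: Setting (prophet inequality, max-expectation objective): there are $n$ boxes; box $i$ contains a value $v_i\sim F_i$, independently across boxes, and the distributions are known in advance. Boxes arrive one at a time in an arrival order $\pi$; when a box arrives, its identity and realized value are revealed and an online algorithm must immediately and irrevocably either accept it (and stop, receiving its value) or reject it forever. If no box is accepted the algorithm receives $0$. An order-aware algorithm knows $\pi$ in advance; an order-unaware algorithm's decision at each step may depend only on the distributions, and the identities and realized values of the boxes that have arrived so far (not on the order of the remaining boxes). $\textsf{OPT}(\pi)$ is the maximum expected accepted value over all order-aware online algorithms for order $\pi$. The algorithm $\textsf{ALG}$: relabel boxes so that they arrive in order $1,2,\dots,n$. For step $t$, let $y_t=\max_{s>t} v_s$ (the maximum over boxes not yet arrived; $y_n=0$). Define $\alpha_t=\frac1\phi\mathbb{E}[y_t]$ and let $\beta_t$ be the unique $x\ge 0$ solving $\mathbb{E}[(y_t-\phi x)^+]=x$ (so $\alpha_n=\beta_n=0$). $\textsf{ALG}$ accepts box $t$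 (if it has not stopped yet) if and only if its realized value $\theta_t$ satisfies $\theta_t\ge \tau_t:=\max(\alpha_t,\beta_t)$. Note $\alpha_t,\beta_t$ depend only on the set of remaining boxes, so $\textsf{ALG}$ is order-unaware. *)

theory Defs
  imports "HOL-Probability.Probability"
begin

definition golden :: real where
  "golden = (1 + sqrt 5) / 2"

definition arrival_space :: "nat \<Rightarrow> (nat \<Rightarrow> real measure) \<Rightarrow> (nat \<Rightarrow> nat) \<Rightarrow> (nat \<Rightarrow> real) measure" where
  "arrival_space n F \<pi> = PiM {..<n} (\<lambda>t. F (\<pi> t))"

definition online_rule :: "nat \<Rightarrow> (nat \<Rightarrow> real) measure \<Rightarrow> (nat \<Rightarrow> (nat \<Rightarrow> real) \<Rightarrow> bool) \<Rightarrow> bool" where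
  "online_rule n \<Omega> s \<longleftrightarrow>
     (\<forall>t<n. (\<forall>\<omega> \<omega>'. (\<forall>i\<le>t. \<omega> i = \<omega>' i) \<longrightarrow> s t \<omega> = s t \<omega>')
           \<and> {\<omega> \<in> space \<Omega>. s t \<omega>} \<in> sets \<Omega>)"

definition stop_value :: "nat \<Rightarrow> (nat \<Rightarrow> (nat \<Rightarrow> real) \<Rightarrow> bool) \<Rightarrow> (nat \<Rightarrow> real) \<Rightarrow> real" where
  "stop_value n s \<omega> = (if \<exists>t<n. s t \<omega> then \<omega> (LEAST t. s t \<omega>) else 0)"

definition expected_value :: "nat \<Rightarrow> (nat \<Rightarrow> real) measure \<Rightarrow> (nat \<Rightarrow> (nat \<Rightarrow> real) \<Rightarrow> bool) \<Rightarrow> ennreal" where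
  "expected_value n \<Omega> s = (\<integral>\<^sup>+ \<omega>. ennreal (stop_value n s \<omega>) \<partial>\<Omega>)"

definition OPT :: "nat \<Rightarrow> (nat \<Rightarrow> real measure) \<Rightarrow> (nat \<Rightarrow> nat) \<Rightarrow> ennreal" where
  "OPT n F \<pi> = (SUP s \<in> {s. online_rule n (arrival_space n F \<pi>) s}.
                   expected_value n (arrival_space n F \<pi>) s)"

definition y_future :: "nat \<Rightarrow> nat \<Rightarrow> (nat \<Rightarrow> real) \<Rightarrow> real" where
  "y_future n t \<omega> = Max (insert 0 (\<omega> ` {Suc t..<n}))"

definition alpha_thr :: "nat \<Rightarrow> (nat \<Rightarrow> real measure) \<Rightarrow> (nat \<Rightarrow> nat) \<Rightarrow> nat \<Rightarrow> real" where
  "alpha_thr n F \<pi> t = (1 / golden) * (\<integral>\<omega>. y_future n t \<omega> \<partial>(arrival_space n F \<pi>))"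

definition beta_thr :: "nat \<Rightarrow> (nat \<Rightarrow> real measure) \<Rightarrow> (nat \<Rightarrow> nat) \<Rightarrow> nat \<Rightarrow> real" where
  "beta_thr n F \<pi> t = (THE x. x \<ge> 0 \<and>
      (\<integral>\<omega>. max 0 (y_future n t \<omega> - golden * x) \<partial>(arrival_space n F \<pi>)) = x)"

definition ALG_rule :: "nat \<Rightarrow> (nat \<Rightarrow> real measure) \<Rightarrow> (nat \<Rightarrow> nat) \<Rightarrow> nat \<Rightarrow> (nat \<Rightarrow> real) \<Rightarrow> bool" where
  "ALG_rule n F \<pi> t \<omega> = (\<omega> t \<ge> max (alpha_thr n F \<pi> t) (beta_thr n F \<pi> t))"

definition ALG :: "nat \<Rightarrow> (nat \<Rightarrow> real measure) \<Rightarrow> (nat \<Rightarrow> nat) \<Rightarrow> ennreal" where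
  "ALG n F \<pi> = expected_value n (arrival_space n F \<pi>) (ALG_rule n F \<pi>)"

end

theory Submission
  imports Defs
begin

lemma ennreal_max': "ennreal (max a b) = max (ennreal a) (ennreal b)"
proof (cases "a \<le> b")
  case True
  then have "ennreal a \<le> ennreal b" by (rule ennreal_leI)
  then show ?thesis using True by (simp add: max_absorb2)
next
  case False
  then have "ennreal b \<le> ennreal a" by (intro ennreal_leI) simp
  then show ?thesis using False by (simp add: max_absorb1)
qed

lemma golden_pos: "golden > 0" unfolding golden_def by (simp add: add_pos_nonneg)
lemma golden_ge1: "1 \<le> golden"
proof -
  have "1 \<le> sqrt 5" by simp
  then show ?thesis unfolding golden_def by simp
qed
lemma golden_sq: "golden * golden = golden + 1"
  unfolding golden_def by (simp add: field_simps)

lemma beta_facts: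
  fixes Q :: "'a measure" and Y :: "'a \<Rightarrow> real"
  assumes Q: "prob_space Q" and Yi: "integrable Q Y" and Y0: "\<And>w. 0 \<le> Y w"
  shows "\<exists>!x. x \<ge> 0 \<and> (\<integral>w. max 0 (Y w - golden * x) \<partial>Q) = x"
proof -
  interpret Q: prob_space Q by (rule Q)
  define g where "g x = (\<integral>w. max 0 (Y w - golden * x) \<partial>Q)" for x
  have gi: "integrable Q (\<lambda>w. max 0 (Y w - golden * x))" for x
    using Yi by auto
  have gmono: "g x' \<le> g x" if "x \<le> x'" for x x'
  proof -
    have "golden*x \<le> golden*x'" using that golden_pos by (intro mult_left_mono) auto
    then show ?thesis unfolding g_def by (intro integral_mono gi) (auto simp: max_def)
  qed
  have glip: "g x - g x' \<le> golden * \<bar>x - x'\<bar>" for x x'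
  proof -
    have "g x - g x' = (\<integral>w. max 0 (Y w - golden * x) - max 0 (Y w - golden * x') \<partial>Q)"
      unfolding g_def using gi by (simp add: Bochner_Integration.integral_diff)
    also have "\<dots> \<le> (\<integral>w. golden * \<bar>x - x'\<bar> \<partial>Q)"
    proof (intro integral_mono)
      show "integrable Q (\<lambda>w. max 0 (Y w - golden * x) - max 0 (Y w - golden * x'))"
        using gi by auto
      show "integrable Q (\<lambda>w. golden * \<bar>x - x'\<bar>)" by simp
      fix w
      have "golden * x' - golden * x \<le> golden * \<bar>x - x'\<bar>"
        using golden_pos by (simp add: abs_if right_diff_distrib[symmetric] mult_left_mono)
      moreover have "0 \<le> golden * \<bar>x - x'\<bar>" using golden_pos by simp
      ultimately show "max 0 (Y w - golden * x) - max 0 (Y w - golden * x') \<le> golden * \<bar>x - x'\<bar>"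
        by (auto simp: max_def)
    qed
    also have "\<dots> = golden * \<bar>x - x'\<bar>" by (simp add: Q.prob_space)
    finally show ?thesis .
  qed
  have cont: "continuous_on S (\<lambda>x. g x - x)" for S
  proof -
    have "(golden + 1)-lipschitz_on S (\<lambda>x. g x - x)"
    proof (rule lipschitz_onI)
      fix x y
      have "g x - g y \<le> golden * \<bar>x - y\<bar>" "g y - g x \<le> golden * \<bar>y - x\<bar>" using glip by auto
      then show "dist (g x - x) (g y - y) \<le> (golden + 1) * dist x y"
        apply (simp add: dist_real_def abs_le_iff algebra_simps abs_minus_commute)
        using abs_ge_self[of "x-y"] abs_ge_minus_self[of "x-y"] by (intro conjI; linarith)
    qed (use golden_pos in simp)
    then show ?thesis by (rule lipschitz_on_continuous_on)
  qed
  define E where "E = (\<integral>w. Y w \<partial>Q)"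
  have E0: "0 \<le> E" unfolding E_def using Y0 by simp
  have g0: "g 0 = E" unfolding g_def E_def using Y0 by (simp add: max_def)
  have gE: "g E \<le> E"
  proof -
    have "g E \<le> (\<integral>w. Y w \<partial>Q)"
      unfolding g_def using Yi gi
    proof (intro integral_mono)
      fix w show "max 0 (Y w - golden * E) \<le> Y w" using Y0[of w] E0 golden_pos by simp
    qed auto
    then show ?thesis by (simp add: E_def)
  qed
  obtain x where x: "0 \<le> x" "x \<le> E" "g x - x = 0"
    using IVT2'[of "\<lambda>x. g x - x" E 0 0] gE g0 E0 cont by auto
  show ?thesis
  proof (rule ex1I[of _ x])
    show "0 \<le> x \<and> (\<integral>w. max 0 (Y w - golden * x) \<partial>Q) = x" using x unfolding g_def by simp
    fix y assume y: "0 \<le> y \<and> (\<integral>w. max 0 (Y w - golden * y) \<partial>Q) = y"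
    then have gy: "g y = y" unfolding g_def by simp
    show "y = x"
    proof (rule ccontr)
      assume "y \<noteq> x"
      then consider "y < x" | "x < y" by linarith
      then show False
      proof cases
        case 1 then have "g x \<le> g y" by (intro gmono) simp
        then show False using 1 gy x by simp
      next
        case 2 then have "g y \<le> g x" by (intro gmono) simp
        then show False using 2 gy x by simp
      qed
    qed
  qed
qed


locale PS = product_prob_space M "{..<n}" for M :: "nat \<Rightarrow> real measure" and n :: nat +
  assumes sets_M: "\<And>i. i < n \<Longrightarrow> sets (M i) = sets borel"
    and nonneg: "\<And>i. i < n \<Longrightarrow> AE x in M i. 0 \<le> x"
    and integ: "\<And>i. i < n \<Longrightarrow> integrable (M i) (\<lambda>x. x)"
begin

abbreviation "P \<equiv> PiM {..<n} M"

lemma prob_P: "prob_space P"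
  by (simp add: prob_space_PiM prob_space_axioms M.prob_space_axioms)

lemma space_M: "i < n \<Longrightarrow> space (M i) = UNIV"
  using sets_eq_imp_space_eq[OF sets_M] by simp

lemma upd_space: "w \<in> space P \<Longrightarrow> t < n \<Longrightarrow> w(t := y) \<in> space P"
  by (auto simp: space_PiM PiE_iff space_M extensional_def)

lemma meas_M: "a \<in> borel_measurable borel \<Longrightarrow> t < n \<Longrightarrow> a \<in> borel_measurable (M t)"
  using measurable_cong_sets[OF sets_M[symmetric] refl] by auto

lemma comp_meas: "a \<in> borel_measurable borel \<Longrightarrow> t < n \<Longrightarrow> (\<lambda>w. a (w t)) \<in> borel_measurable P"
  by (rule measurable_compose[OF measurable_component_singleton[of t "{..<n}" M] meas_M]) auto

lemma decomp:
  assumes t: "t < n" and f: "f \<in> borel_measurable P"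
  shows "integral\<^sup>N P f = (\<integral>\<^sup>+ y. (\<integral>\<^sup>+ x. f (x(t := y)) \<partial>(PiM ({..<n} - {t}) M)) \<partial>(M t))"
proof -
  have e: "{..<n} = insert t ({..<n} - {t})" using t by auto
  show ?thesis
    apply (subst e)
    apply (rule product_nn_integral_insert_rev)
    using f e by auto
qed

lemma upd_spaceQ: "x \<in> space (PiM ({..<n} - {t}) M) \<Longrightarrow> t < n \<Longrightarrow> x(t := y) \<in> space P"
  by (auto simp: space_PiM PiE_iff space_M extensional_def)

lemma indep:
  assumes t: "t < n" and a: "a \<in> borel_measurable borel" and b: "b \<in> borel_measurable P"
    and inv: "\<And>w y. w \<in> space P \<Longrightarrow> b (w(t := y)) = b w"
  shows "(\<integral>\<^sup>+w. a (w t) * b w \<partial>P) = (\<integral>\<^sup>+x. a x \<partial>M t) * (\<integral>\<^sup>+w. b w \<partial>P)"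
proof -
  let ?Q = "PiM ({..<n} - {t}) M"
  define c where "c x = b (x(t := 0))" for x
  have bc: "b (x(t := y)) = c x" if "x \<in> space ?Q" for x y
  proof -
    have "x(t := 0) \<in> space P" using upd_spaceQ[OF that t] .
    from inv[OF this, of y] show ?thesis by (simp add: c_def)
  qed
  have cm: "c \<in> borel_measurable ?Q"
    unfolding c_def
  proof (rule measurable_compose[OF _ b], rule measurable_PiM_single')
    fix i assume i: "i \<in> {..<n}"
    show "(\<lambda>x. (x(t := 0)) i) \<in> ?Q \<rightarrow>\<^sub>M M i"
    proof (cases "i = t")
      case True
      then show ?thesis using i space_M[of i] by simp
    next
      case False
      then show ?thesis using i by (simp add: measurable_component_singleton)
    qed
  next
    show "(\<lambda>x. x(t := 0)) \<in> space ?Q \<rightarrow> (\<Pi>\<^sub>E i\<in>{..<n}. space (M i))"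
      using t by (auto simp: space_PiM PiE_iff space_M extensional_def)
  qed
  have am: "a \<in> borel_measurable (M t)" by (rule meas_M[OF a t])
  have m1: "(\<lambda>w. a (w t) * b w) \<in> borel_measurable P"
    by (rule borel_measurable_times_ennreal[OF comp_meas[OF a t] b])
  have "(\<integral>\<^sup>+w. a (w t) * b w \<partial>P) = (\<integral>\<^sup>+ y. (\<integral>\<^sup>+ x. a y * c x \<partial>?Q) \<partial>(M t))"
    by (subst decomp[OF t m1]) (auto intro!: nn_integral_cong simp: bc)
  also have "\<dots> = (\<integral>\<^sup>+ y. a y * (\<integral>\<^sup>+ x. c x \<partial>?Q) \<partial>(M t))"
    by (simp add: nn_integral_cmult cm)
  also have "\<dots> = (\<integral>\<^sup>+x. a x \<partial>M t) * (\<integral>\<^sup>+ x. c x \<partial>?Q)"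
    by (simp add: nn_integral_multc am)
  also have "(\<integral>\<^sup>+ x. c x \<partial>?Q) = (\<integral>\<^sup>+w. b w \<partial>P)"
  proof -
    have "(\<integral>\<^sup>+w. b w \<partial>P) = (\<integral>\<^sup>+ y. (\<integral>\<^sup>+ x. c x \<partial>?Q) \<partial>(M t))"
      by (subst decomp[OF t b]) (intro nn_integral_cong, simp add: bc)
    also have "\<dots> = (\<integral>\<^sup>+ x. c x \<partial>?Q)"
      by (simp add: M.emeasure_space_1)
    finally show ?thesis by simp
  qed
  finally show ?thesis .
qed

lemma J:
  assumes t: "t < n" and b: "b \<in> borel_measurable P"
    and inv: "\<And>w y. w \<in> space P \<Longrightarrow> b (w(t := y)) = b w"
  shows "(\<integral>\<^sup>+x. max (ennreal x) (\<integral>\<^sup>+w. b w \<partial>P) \<partial>M t) \<le> (\<integral>\<^sup>+w. max (ennreal (w t)) (b w) \<partial>P)"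
proof -
  let ?Q = "PiM ({..<n} - {t}) M"
  interpret Q: prob_space ?Q by (simp add: prob_space_PiM M.prob_space_axioms)
  define c where "c x = b (x(t := 0))" for x
  have bc: "b (x(t := y)) = c x" if "x \<in> space ?Q" for x y
  proof -
    have "x(t := 0) \<in> space P" using upd_spaceQ[OF that t] .
    from inv[OF this, of y] show ?thesis by (simp add: c_def)
  qed
  have cm: "c \<in> borel_measurable ?Q"
    unfolding c_def
  proof (rule measurable_compose[OF _ b], rule measurable_PiM_single')
    fix i assume i: "i \<in> {..<n}"
    show "(\<lambda>x. (x(t := 0)) i) \<in> ?Q \<rightarrow>\<^sub>M M i"
    proof (cases "i = t")
      case True
      then show ?thesis using i space_M[of i] by simp
    next
      case False
      then show ?thesis using i by (simp add: measurable_component_singleton)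
    qed
  next
    show "(\<lambda>x. x(t := 0)) \<in> space ?Q \<rightarrow> (\<Pi>\<^sub>E i\<in>{..<n}. space (M i))"
      using t by (auto simp: space_PiM PiE_iff space_M extensional_def)
  qed
  have m1: "(\<lambda>w. max (ennreal (w t)) (b w)) \<in> borel_measurable P"
  proof -
    have "(\<lambda>w. ennreal (w t)) \<in> borel_measurable P" by (rule comp_meas[OF _ t]) simp
    from borel_measurable_max[OF this b] show ?thesis by (simp add: max.commute)
  qed
  have bP: "(\<integral>\<^sup>+w. b w \<partial>P) = (\<integral>\<^sup>+ x. c x \<partial>?Q)"
  proof -
    have "(\<integral>\<^sup>+w. b w \<partial>P) = (\<integral>\<^sup>+ y. (\<integral>\<^sup>+ x. c x \<partial>?Q) \<partial>(M t))"
      by (subst decomp[OF t b]) (intro nn_integral_cong, simp add: bc)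
    also have "\<dots> = (\<integral>\<^sup>+ x. c x \<partial>?Q)"
      by (simp add: M.emeasure_space_1)
    finally show ?thesis by simp
  qed
  have "(\<integral>\<^sup>+w. max (ennreal (w t)) (b w) \<partial>P) = (\<integral>\<^sup>+ y. (\<integral>\<^sup>+ x. max (ennreal y) (c x) \<partial>?Q) \<partial>(M t))"
    by (subst decomp[OF t m1]) (intro nn_integral_cong, simp add: bc)
  also have "\<dots> \<ge> (\<integral>\<^sup>+ y. max (ennreal y) (\<integral>\<^sup>+ x. c x \<partial>?Q) \<partial>(M t))"
  proof (rule nn_integral_mono)
    fix y
    have "ennreal y = (\<integral>\<^sup>+ x. ennreal y \<partial>?Q)" by (simp add: Q.emeasure_space_1)
    also have "\<dots> \<le> (\<integral>\<^sup>+ x. max (ennreal y) (c x) \<partial>?Q)" by (intro nn_integral_mono) simp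
    finally have 1: "ennreal y \<le> (\<integral>\<^sup>+ x. max (ennreal y) (c x) \<partial>?Q)" .
    have 2: "(\<integral>\<^sup>+ x. c x \<partial>?Q) \<le> (\<integral>\<^sup>+ x. max (ennreal y) (c x) \<partial>?Q)" by (intro nn_integral_mono) simp
    show "max (ennreal y) (\<integral>\<^sup>+ x. c x \<partial>?Q) \<le> (\<integral>\<^sup>+ x. max (ennreal y) (c x) \<partial>?Q)"
      using 1 2 by simp
  qed
  finally show ?thesis by (simp add: bP)
qed

definition sv :: "(nat \<Rightarrow> (nat \<Rightarrow> real) \<Rightarrow> bool) \<Rightarrow> nat \<Rightarrow> (nat \<Rightarrow> real) \<Rightarrow> real" where
  "sv s t w = (if \<exists>t'. t \<le> t' \<and> t' < n \<and> s t' w then w (LEAST t'. t \<le> t' \<and> s t' w) else 0)"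

lemma sv_n: "sv s n w = 0"
  unfolding sv_def by auto

lemma sv_Suc: assumes "t < n" shows "sv s t w = (if s t w then w t else sv s (Suc t) w)"
proof (cases "s t w")
  case True
  have "(LEAST t'. t \<le> t' \<and> s t' w) = t"
    by (rule Least_equality) (use True in auto)
  then show ?thesis using True assms unfolding sv_def by auto
next
  case False
  have e: "(\<lambda>t'. t \<le> t' \<and> s t' w) = (\<lambda>t'. Suc t \<le> t' \<and> s t' w)"
    using False by (auto simp: le_less Suc_le_eq)
  have e2: "(\<exists>t'. t \<le> t' \<and> t' < n \<and> s t' w) = (\<exists>t'. Suc t \<le> t' \<and> t' < n \<and> s t' w)"
    using False by (metis Suc_leD le_antisym not_less_eq_eq)
  show ?thesis using False unfolding sv_def e e2 by simp
qed

lemma stop_sv: "stop_value n s w = sv s 0 w"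
  unfolding stop_value_def sv_def by auto

lemma sv_meas:
  assumes on: "online_rule n P s" and "t \<le> n"
  shows "(\<lambda>w. ennreal (sv s t w)) \<in> borel_measurable P"
  using assms(2)
proof (induction "n - t" arbitrary: t)
  case 0
  then have "t = n" by simp
  then show ?case by (simp add: sv_n)
next
  case (Suc k)
  then have t: "t < n" by simp
  have e: "(\<lambda>w. ennreal (sv s t w)) = (\<lambda>w. if s t w then ennreal (w t) else ennreal (sv s (Suc t) w))"
    using sv_Suc[OF t] by (auto intro!: ext)
  have "(\<lambda>w. ennreal (sv s (Suc t) w)) \<in> borel_measurable P"
    using Suc(1)[of "Suc t"] Suc(2) t by simp
  moreover have "(\<lambda>w. ennreal (w t)) \<in> borel_measurable P"
    by (rule comp_meas[OF _ t]) simp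
  moreover have "{w \<in> space P. s t w} \<in> sets P" using on t unfolding online_rule_def by blast
  ultimately show ?case unfolding e by (intro measurable_If)
qed

fun VV :: "nat \<Rightarrow> ennreal" where
  "VV 0 = 0"
| "VV (Suc k) = (\<integral>\<^sup>+x. max (ennreal x) (VV k) \<partial>M (n - Suc k))"

definition V :: "nat \<Rightarrow> ennreal" where "V t = VV (n - t)"

lemma V_n: "V n = 0" by (simp add: V_def)

lemma V_Suc: "t < n \<Longrightarrow> V t = (\<integral>\<^sup>+x. max (ennreal x) (V (Suc t)) \<partial>M t)"
proof -
  assume t: "t < n"
  then have "n - t = Suc (n - Suc t)" by simp
  then show ?thesis using t by (simp add: V_def)
qed

lemma opt_bound:
  assumes on: "online_rule n P s" and "t \<le> n"
    and "h \<in> borel_measurable P" and "\<And>w w'. (\<And>i. i < t \<Longrightarrow> w i = w' i) \<Longrightarrow> h w = h w'"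
  shows "(\<integral>\<^sup>+w. h w * ennreal (sv s t w) \<partial>P) \<le> V t * (\<integral>\<^sup>+w. h w \<partial>P)"
  using assms(2-)
proof (induction "n - t" arbitrary: t h)
  case 0
  have "t = n" using "0.hyps" "0.prems"(1) by simp
  then show ?case by (simp add: sv_n)
next
  case (Suc k)
  have t: "t < n" using Suc.hyps(2) by simp
  note hm = Suc(4)
  let ?S = "{w \<in> space P. s t w}"
  have S: "?S \<in> sets P" using on t unfolding online_rule_def by blast
  have sdep: "s t w = s t w'" if "\<And>i. i \<le> t \<Longrightarrow> w i = w' i" for w w'
    using on t that unfolding online_rule_def by blast
  define h' where "h' w = (if s t w then 0 else h w)" for w
  have h'm: "h' \<in> borel_measurable P" unfolding h'_def using hm S by (intro measurable_If) auto
  have h'd: "h' w = h' w'" if "\<And>i. i < Suc t \<Longrightarrow> w i = w' i" for w w'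
  proof -
    have "s t w = s t w'" using that by (intro sdep) auto
    moreover have "h w = h w'" using that by (intro Suc(5)) auto
    ultimately show ?thesis by (simp add: h'_def)
  qed
  have svm: "(\<lambda>w. ennreal (sv s (Suc t) w)) \<in> borel_measurable P"
    using sv_meas[OF on, of "Suc t"] t by simp
  have wt: "(\<lambda>w. ennreal (w t)) \<in> borel_measurable P"
    by (rule comp_meas[OF _ t]) simp
  define g where "g w = (if s t w then h w * ennreal (w t) else 0)" for w
  have gm: "g \<in> borel_measurable P" unfolding g_def using hm wt S by (intro measurable_If) auto
  have IH: "(\<integral>\<^sup>+w. h' w * ennreal (sv s (Suc t) w) \<partial>P) \<le> V (Suc t) * (\<integral>\<^sup>+w. h' w \<partial>P)"
  proof -
    have kt: "k = n - Suc t" using Suc.hyps(2) by simp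
    have st: "Suc t \<le> n" using t by simp
    show ?thesis by (rule Suc(1)[OF kt st h'm h'd])
  qed
  have "(\<integral>\<^sup>+w. h w * ennreal (sv s t w) \<partial>P) = (\<integral>\<^sup>+w. g w + h' w * ennreal (sv s (Suc t) w) \<partial>P)"
    by (intro nn_integral_cong) (simp add: sv_Suc[OF t] g_def h'_def)
  also have "\<dots> = (\<integral>\<^sup>+w. g w \<partial>P) + (\<integral>\<^sup>+w. h' w * ennreal (sv s (Suc t) w) \<partial>P)"
    using gm h'm svm by (intro nn_integral_add) auto
  also have "\<dots> \<le> (\<integral>\<^sup>+w. g w \<partial>P) + V (Suc t) * (\<integral>\<^sup>+w. h' w \<partial>P)"
    using IH by (intro add_left_mono)
  also have "\<dots> = (\<integral>\<^sup>+w. g w + V (Suc t) * h' w \<partial>P)"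
    using gm h'm by (simp add: nn_integral_add nn_integral_cmult)
  also have "\<dots> \<le> (\<integral>\<^sup>+w. max (ennreal (w t)) (V (Suc t)) * h w \<partial>P)"
  proof (intro nn_integral_mono)
    fix w
    show "g w + V (Suc t) * h' w \<le> max (ennreal (w t)) (V (Suc t)) * h w"
    proof (cases "s t w")
      case True
      then show ?thesis by (simp add: g_def h'_def mult.commute mult_left_mono)
    next
      case False
      then show ?thesis by (simp add: g_def h'_def mult.commute mult_left_mono)
    qed
  qed
  also have "\<dots> = (\<integral>\<^sup>+x. max (ennreal x) (V (Suc t)) \<partial>M t) * (\<integral>\<^sup>+w. h w \<partial>P)"
  proof (rule indep[OF t _ hm])
    show "(\<lambda>x. max (ennreal x) (V (Suc t))) \<in> borel_measurable borel" by measurable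
    fix w y assume "w \<in> space P"
    show "h (w(t := y)) = h w" by (intro Suc(5)) auto
  qed
  also have "\<dots> = V t * (\<integral>\<^sup>+w. h w \<partial>P)" by (simp add: V_Suc[OF t])
  finally show ?case .
qed

lemma OPT_le_V:
  assumes on: "online_rule n P s"
  shows "(\<integral>\<^sup>+w. ennreal (stop_value n s w) \<partial>P) \<le> V 0"
proof -
  have "(\<integral>\<^sup>+w. 1 * ennreal (sv s 0 w) \<partial>P) \<le> V 0 * (\<integral>\<^sup>+w. 1 \<partial>P)"
    by (rule opt_bound[OF on]) auto
  then show ?thesis by (simp add: stop_sv P.emeasure_space_1)
qed

subsection \<open>Thresholds\<close>

lemma yf_nonneg: "0 \<le> y_future n t w"
  unfolding y_future_def by (rule Max_ge) auto

lemma yf_last: "n \<le> Suc t \<Longrightarrow> y_future n t w = 0"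
  unfolding y_future_def by simp

lemma yf_Suc: assumes "Suc t < n" shows "y_future n t w = max (w (Suc t)) (y_future n (Suc t) w)"
proof -
  have e: "{Suc t..<n} = insert (Suc t) {Suc (Suc t)..<n}" using assms by auto
  have "y_future n t w = Max (insert (w (Suc t)) (insert 0 (w ` {Suc (Suc t)..<n})))"
    unfolding y_future_def e by (simp add: insert_commute)
  also have "\<dots> = max (w (Suc t)) (Max (insert 0 (w ` {Suc (Suc t)..<n})))"
    by (rule Max_insert) auto
  finally show ?thesis unfolding y_future_def by simp
qed

lemma yf_dep: "j \<le> t \<Longrightarrow> y_future n t (w(j := y)) = y_future n t w"
proof -
  assume "j \<le> t"
  then have "(w(j := y)) ` {Suc t..<n} = w ` {Suc t..<n}" by (intro image_cong) auto
  then show ?thesis unfolding y_future_def by simp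
qed

lemma comp_int: "i < n \<Longrightarrow> integrable P (\<lambda>w. w i)"
proof -
  assume i: "i < n"
  have "integrable (M i) (\<lambda>x. x)" using integ[OF i] .
  then have "integrable (distr P (M i) (\<lambda>w. w i)) (\<lambda>x. x)"
    using PiM_component[of i] i by simp
  then show ?thesis
    by (subst (asm) integrable_distr_eq) (auto intro: meas_M[OF _ i] measurable_component_singleton simp: i)
qed

lemma marg: fixes f :: "real \<Rightarrow> real" assumes i: "i < n" and f: "f \<in> borel_measurable borel"
  shows "(\<integral>w. f (w i) \<partial>P) = (\<integral>x. f x \<partial>M i)"
proof -
  have "(\<integral>x. f x \<partial>M i) = (\<integral>x. f x \<partial>distr P (M i) (\<lambda>w. w i))"
    using PiM_component[of i] i by simp
  also have "\<dots> = (\<integral>w. f (w i) \<partial>P)"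
    by (rule integral_distr[of "\<lambda>w. w i" P "M i" f]) (auto intro: meas_M[OF f i] measurable_component_singleton simp: i)
  finally show ?thesis by simp
qed

lemma yf_int: "integrable P (y_future n t)"
proof (induction "n - Suc t" arbitrary: t)
  case 0
  then have "y_future n t = (\<lambda>w. 0)" by (intro ext yf_last) simp
  then show ?case by simp
next
  case (Suc k)
  have st: "Suc t < n" using Suc.hyps(2) by simp
  have "integrable P (y_future n (Suc t))" using Suc.hyps(1)[of "Suc t"] Suc.hyps(2) by simp
  moreover have "integrable P (\<lambda>w. w (Suc t))" using comp_int[OF st] .
  ultimately have "integrable P (\<lambda>w. max (w (Suc t)) (y_future n (Suc t) w))" by auto
  moreover have "y_future n t = (\<lambda>w. max (w (Suc t)) (y_future n (Suc t) w))"
    using yf_Suc[OF st] by (intro ext) simp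
  ultimately show ?case by simp
qed

lemma yf_meas: "y_future n t \<in> borel_measurable P"
  using yf_int by (rule borel_measurable_integrable)

definition Y :: "nat \<Rightarrow> real" where "Y t = (\<integral>w. y_future n t w \<partial>P)"

definition be :: "nat \<Rightarrow> real" where
  "be t = (THE x. x \<ge> 0 \<and> (\<integral>w. max 0 (y_future n t w - golden * x) \<partial>P) = x)"

definition tau :: "nat \<Rightarrow> real" where "tau t = max ((1 / golden) * Y t) (be t)"

definition A :: "nat \<Rightarrow> (nat \<Rightarrow> real) \<Rightarrow> bool" where "A t w = (w t \<ge> tau t)"

definition G :: "nat \<Rightarrow> ennreal" where "G t = (\<integral>\<^sup>+w. ennreal (sv A t w) \<partial>P)"

definition gg :: "nat \<Rightarrow> real \<Rightarrow> real" where
  "gg t x = (\<integral>w. max 0 (y_future n t w - golden * x) \<partial>P)"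

lemma Y_nonneg: "0 \<le> Y t" unfolding Y_def by (simp add: yf_nonneg)

lemma be_prop: "0 \<le> be t" "gg t (be t) = be t"
proof -
  have "\<exists>!x. x \<ge> 0 \<and> (\<integral>w. max 0 (y_future n t w - golden * x) \<partial>P) = x"
    by (rule beta_facts[OF prob_P yf_int yf_nonneg])
  from theI'[OF this] show "0 \<le> be t" "gg t (be t) = be t" unfolding be_def gg_def by auto
qed

lemma gg_int: "integrable P (\<lambda>w. max 0 (y_future n t w - c))"
proof -
  show ?thesis using yf_int[of t] by auto
qed

lemma gg_mono: "x \<le> x' \<Longrightarrow> gg t x' \<le> gg t x"
proof -
  assume "x \<le> x'"
  then have "golden*x \<le> golden*x'" using golden_pos by (intro mult_left_mono) auto
  then show ?thesis unfolding gg_def by (intro integral_mono gg_int) (auto simp: max_def)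
qed

lemma Y_le_be: "Y t \<le> golden * golden * be t"
proof -
  have "Y t - golden * be t = (\<integral>w. y_future n t w - golden * be t \<partial>P)"
    unfolding Y_def using yf_int by (simp add: Bochner_Integration.integral_diff P.prob_space)
  also have "\<dots> \<le> gg t (be t)" unfolding gg_def
    by (intro integral_mono gg_int) (auto simp: yf_int)
  also have "\<dots> = be t" by (rule be_prop)
  finally show ?thesis using golden_sq by (simp add: algebra_simps)
qed

lemma tau_nonneg: "0 \<le> tau t" unfolding tau_def using be_prop(1)[of t] by simp

lemma tau_le: "tau t \<le> golden * be t"
proof -
  have "(1 / golden) * Y t \<le> (1 / golden) * (golden * golden * be t)"
    using Y_le_be[of t] golden_pos by (intro mult_left_mono) auto
  also have "\<dots> = golden * be t" using golden_pos by simp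
  finally have 1: "(1 / golden) * Y t \<le> golden * be t" .
  have "be t \<le> golden * be t" using golden_ge1 be_prop(1)[of t] by (simp add: mult_le_cancel_right1)
  then show ?thesis using 1 unfolding tau_def by simp
qed

lemma Y_le_tau: "Y t \<le> golden * tau t"
proof -
  have "Y t = golden * ((1 / golden) * Y t)" using golden_pos by simp
  also have "\<dots> \<le> golden * tau t" unfolding tau_def using golden_pos by (intro mult_left_mono) auto
  finally show ?thesis .
qed

lemma Y_ennreal: "ennreal (Y t) = (\<integral>\<^sup>+w. ennreal (y_future n t w) \<partial>P)"
  unfolding Y_def by (rule nn_integral_eq_integral[symmetric]) (auto simp: yf_int yf_nonneg)

lemma V_le_Y: "t < n \<Longrightarrow> V (Suc t) \<le> ennreal (Y t)"
proof (induction "n - Suc t" arbitrary: t)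
  case 0
  then have "Suc t = n" by simp
  then show ?case by (simp add: V_n)
next
  case (Suc k)
  have st: "Suc t < n" using Suc.hyps(2) by simp
  have IH: "V (Suc (Suc t)) \<le> ennreal (Y (Suc t))" using Suc.hyps(1)[of "Suc t"] Suc.hyps(2) st by simp
  have bm: "(\<lambda>w. ennreal (y_future n (Suc t) w)) \<in> borel_measurable P" using yf_meas by measurable
  have "V (Suc t) = (\<integral>\<^sup>+x. max (ennreal x) (V (Suc (Suc t))) \<partial>M (Suc t))" by (rule V_Suc[OF st])
  also have "\<dots> \<le> (\<integral>\<^sup>+x. max (ennreal x) (\<integral>\<^sup>+w. ennreal (y_future n (Suc t) w) \<partial>P) \<partial>M (Suc t))"
    using IH unfolding Y_ennreal by (intro nn_integral_mono max.mono order_refl)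
  also have "\<dots> \<le> (\<integral>\<^sup>+w. max (ennreal (w (Suc t))) (ennreal (y_future n (Suc t) w)) \<partial>P)"
    by (rule J[OF st bm]) (simp add: yf_dep)
  also have "\<dots> = (\<integral>\<^sup>+w. ennreal (y_future n t w) \<partial>P)"
    by (intro nn_integral_cong) (simp add: yf_Suc[OF st] ennreal_max')
  finally show ?case by (simp add: Y_ennreal)
qed

subsection \<open>The algorithm\<close>

lemma A_online: "online_rule n P A"
  unfolding online_rule_def
proof (rule allI, rule impI)
  fix t assume t: "t < n"
  have 1: "\<forall>w w'. (\<forall>i\<le>t. w i = w' i) \<longrightarrow> A t w = A t w'" unfolding A_def by auto
  have "(\<lambda>w. w t) \<in> borel_measurable P" by (rule comp_meas[OF _ t]) simp
  then have 2: "{w \<in> space P. A t w} \<in> sets P" unfolding A_def borel_measurable_iff_ge by blast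
  show "(\<forall>w w'. (\<forall>i\<le>t. w i = w' i) \<longrightarrow> A t w = A t w') \<and> {w \<in> space P. A t w} \<in> sets P"
    using 1 2 by blast
qed

lemma svA_dep: assumes j: "j < t" shows "sv A t (w(j := y)) = sv A t w"
proof -
  have e: "\<And>t'. t \<le> t' \<Longrightarrow> (w(j:=y)) t' = w t'" using j by auto
  have e': "\<And>t'. t \<le> t' \<Longrightarrow> A t' (w(j:=y)) = A t' w" unfolding A_def using e by simp
  have p: "(\<lambda>t'. t \<le> t' \<and> A t' (w(j:=y))) = (\<lambda>t'. t \<le> t' \<and> A t' w)"
    by (intro ext) (use e' in blast)
  have q: "(\<exists>t'. t \<le> t' \<and> t' < n \<and> A t' (w(j:=y))) = (\<exists>t'. t \<le> t' \<and> t' < n \<and> A t' w)"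
  proof -
    { fix t' have "(t \<le> t' \<and> t' < n \<and> A t' (w(j:=y))) = (t \<le> t' \<and> t' < n \<and> A t' w)"
        using e' by blast }
    then show ?thesis by simp
  qed
  show ?thesis
  proof (cases "\<exists>t'. t \<le> t' \<and> t' < n \<and> A t' w")
    case True
    then have "t \<le> (LEAST t'. t \<le> t' \<and> A t' w)"
      by (metis (mono_tags, lifting) LeastI_ex)
    then show ?thesis unfolding sv_def q p using True e by simp
  next
    case False
    have nF: "\<not>(\<exists>t'. t \<le> t' \<and> t' < n \<and> A t' (w(j:=y)))" using False q by simp
    show ?thesis unfolding sv_def if_not_P[OF nF] if_not_P[OF False] ..
  qed
qed

lemma G_n: "G n = 0" unfolding G_def by (simp add: sv_n)

lemma G_rec: assumes t: "t < n"
  shows "G t = (\<integral>\<^sup>+x. (if tau t \<le> x then ennreal x else G (Suc t)) \<partial>M t)"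
proof -
  define a1 where "a1 x = (if tau t \<le> x then ennreal x else 0)" for x
  define a2 where "a2 x = (if tau t \<le> x then 0 else (1::ennreal))" for x
  have a1m: "a1 \<in> borel_measurable borel" unfolding a1_def by measurable
  have a2m: "a2 \<in> borel_measurable borel" unfolding a2_def by measurable
  have svm: "(\<lambda>w. ennreal (sv A (Suc t) w)) \<in> borel_measurable P"
    using sv_meas[OF A_online, of "Suc t"] t by simp
  have pw: "ennreal (sv A t w) = a1 (w t) * 1 + a2 (w t) * ennreal (sv A (Suc t) w)" for w
    by (simp add: sv_Suc[OF t] A_def a1_def a2_def)
  have "G t = (\<integral>\<^sup>+w. a1 (w t) * 1 \<partial>P) + (\<integral>\<^sup>+w. a2 (w t) * ennreal (sv A (Suc t) w) \<partial>P)"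
    unfolding G_def pw
    by (rule nn_integral_add) (use comp_meas[OF a1m t] comp_meas[OF a2m t] svm in auto)
  also have "(\<integral>\<^sup>+w. a1 (w t) * 1 \<partial>P) = (\<integral>\<^sup>+x. a1 x \<partial>M t) * (\<integral>\<^sup>+w. 1 \<partial>P)"
    by (rule indep[OF t a1m]) auto
  also have "(\<integral>\<^sup>+w. a2 (w t) * ennreal (sv A (Suc t) w) \<partial>P) = (\<integral>\<^sup>+x. a2 x \<partial>M t) * G (Suc t)"
    unfolding G_def by (rule indep[OF t a2m svm]) (simp add: svA_dep)
  also have "(\<integral>\<^sup>+x. a1 x \<partial>M t) * (\<integral>\<^sup>+w. 1 \<partial>P) + (\<integral>\<^sup>+x. a2 x \<partial>M t) * G (Suc t)
      = (\<integral>\<^sup>+x. a1 x + a2 x * G (Suc t) \<partial>M t)"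
    using meas_M[OF a1m t] meas_M[OF a2m t]
    by (simp add: nn_integral_add nn_integral_multc P.emeasure_space_1)
  also have "\<dots> = (\<integral>\<^sup>+x. (if tau t \<le> x then ennreal x else G (Suc t)) \<partial>M t)"
    by (intro nn_integral_cong) (simp add: a1_def a2_def)
  finally show ?thesis .
qed

lemma beta_le_G: "t < n \<Longrightarrow> ennreal (be t) \<le> G (Suc t)"
proof (induction "n - Suc t" arbitrary: t)
  case 0
  then have st: "n \<le> Suc t" by simp
  have "0 \<le> golden * be t" using be_prop(1)[of t] golden_pos by simp
  then have "gg t (be t) = 0" unfolding gg_def yf_last[OF st] by (simp add: max_def)
  then have "be t = 0" using be_prop(2)[of t] by simp
  then show ?case by simp
next
  case (Suc k)
  define s where "s = Suc t"
  have sn: "s < n" using Suc.hyps(2) s_def by simp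
  have IH: "ennreal (be s) \<le> G (Suc s)" using Suc.hyps(1)[of s] Suc.hyps(2) sn s_def by simp
  define b where "b = be s"
  define \<tau> where "\<tau> = tau s"
  have b0: "0 \<le> b" unfolding b_def by (rule be_prop)
  have \<tau>b: "b \<le> \<tau>" unfolding b_def \<tau>_def tau_def by simp
  define f where "f x = (if \<tau> \<le> x then x else b)" for x
  have fm: "f \<in> borel_measurable borel" unfolding f_def by measurable
  have f_ge: "b \<le> f x" for x using \<tau>b by (simp add: f_def)
  have f0: "0 \<le> f x" for x using f_ge[of x] b0 by simp
  have fi: "integrable (M s) f"
  proof -
    have i1: "integrable (M s) (\<lambda>x. \<bar>x\<bar> + b)" using integ[OF sn] by auto
    have i2: "f \<in> borel_measurable (M s)" by (rule meas_M[OF fm sn])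
    have i3: "AE x in M s. norm (f x) \<le> norm (\<bar>x\<bar> + b)"
      using b0 f0 by (auto simp: f_def)
    show ?thesis by (rule Bochner_Integration.integrable_bound[OF i1 i2 i3])
  qed
  define X0 where "X0 = (\<integral>x. f x \<partial>M s)"
  have X0b: "b \<le> X0"
  proof -
    have "(\<integral>x. b \<partial>M s) \<le> X0" unfolding X0_def using fi f_ge by (intro integral_mono) auto
    then show ?thesis by (simp add: M.prob_space)
  qed
  have G_ge: "ennreal X0 \<le> G s"
  proof -
    have "ennreal X0 = (\<integral>\<^sup>+x. ennreal (f x) \<partial>M s)"
      unfolding X0_def by (rule nn_integral_eq_integral[symmetric]) (use fi f0 in auto)
    also have "\<dots> \<le> (\<integral>\<^sup>+x. (if \<tau> \<le> x then ennreal x else G (Suc s)) \<partial>M s)"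
      using IH by (intro nn_integral_mono) (auto simp: f_def b_def)
    also have "\<dots> = G s" using G_rec[OF sn] by (simp add: \<tau>_def)
    finally show ?thesis .
  qed
  have key: "be t \<le> X0"
  proof (rule ccontr)
    assume neg: "\<not> be t \<le> X0"
    define k where "k = golden * X0"
    have "\<tau> \<le> golden * b" unfolding \<tau>_def b_def by (rule tau_le)
    also have "\<dots> \<le> k" unfolding k_def using X0b golden_pos by simp
    finally have \<tau>k: "\<tau> \<le> k" .
    have bk: "b \<le> k" using \<tau>b \<tau>k by simp
    have ci: "integrable P (\<lambda>w. max 0 (w s - k))" using comp_int[OF sn] by auto
    have ci2: "integrable (M s) (\<lambda>x. max 0 (x - k))" using integ[OF sn] by auto
    have "gg t X0 = (\<integral>w. max 0 (y_future n t w - k) \<partial>P)" unfolding gg_def k_def ..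
    also have "\<dots> \<le> (\<integral>w. max 0 (w s - k) + max 0 (y_future n s w - k) \<partial>P)"
    proof (rule integral_mono)
      show "integrable P (\<lambda>w. max 0 (y_future n t w - k))" by (rule gg_int)
      show "integrable P (\<lambda>w. max 0 (w s - k) + max 0 (y_future n s w - k))"
        using ci gg_int by auto
      fix w
      have "y_future n t w = max (w s) (y_future n s w)" using yf_Suc[of t] sn s_def by simp
      then show "max 0 (y_future n t w - k) \<le> max 0 (w s - k) + max 0 (y_future n s w - k)"
        by (simp add: max_def)
    qed
    also have "\<dots> = (\<integral>w. max 0 (w s - k) \<partial>P) + gg s X0"
      unfolding gg_def k_def[symmetric] by (rule Bochner_Integration.integral_add[OF ci gg_int])
    also have "(\<integral>w. max 0 (w s - k) \<partial>P) = (\<integral>x. max 0 (x - k) \<partial>M s)"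
      by (rule marg[OF sn]) simp
    also have "(\<integral>x. max 0 (x - k) \<partial>M s) \<le> (\<integral>x. f x - b \<partial>M s)"
    proof (rule integral_mono[OF ci2])
      show "integrable (M s) (\<lambda>x. f x - b)" using fi by auto
      fix x
      show "max 0 (x - k) \<le> f x - b"
        using \<tau>k bk f_ge[of x] by (auto simp: f_def max_def)
    qed
    also have "(\<integral>x. f x - b \<partial>M s) = X0 - b"
      unfolding X0_def using fi by (simp add: Bochner_Integration.integral_diff M.prob_space)
    also have "gg s X0 \<le> gg s b" by (rule gg_mono[OF X0b])
    also have "gg s b = b" unfolding b_def by (rule be_prop)
    finally have g1: "gg t X0 \<le> X0" by simp
    have "gg t (be t) \<le> gg t X0" using neg by (intro gg_mono) simp
    then have "be t \<le> X0" using be_prop(2)[of t] g1 by simp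
    then show False using neg by simp
  qed
  have "ennreal (be t) \<le> ennreal X0" using key by (rule ennreal_leI)
  also have "\<dots> \<le> G s" by (rule G_ge)
  finally show ?case by (simp add: s_def)
qed

lemma main: "t \<le> n \<Longrightarrow> V t \<le> ennreal golden * G t"
proof (induction "n - t" arbitrary: t)
  case 0
  then have "t = n" by simp
  then show ?case by (simp add: V_n)
next
  case (Suc k)
  have t: "t < n" using Suc.hyps(2) by simp
  have IH: "V (Suc t) \<le> ennreal golden * G (Suc t)" using Suc.hyps(1)[of "Suc t"] Suc.hyps(2) t by simp
  have F3: "V (Suc t) \<le> ennreal (Y t)" by (rule V_le_Y[OF t])
  have L: "ennreal (be t) \<le> G (Suc t)" by (rule beta_le_G[OF t])
  have hm: "(\<lambda>x. if tau t \<le> x then ennreal x else G (Suc t)) \<in> borel_measurable (M t)"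
    by (rule meas_M[OF _ t]) measurable
  have "V t = (\<integral>\<^sup>+x. max (ennreal x) (V (Suc t)) \<partial>M t)" by (rule V_Suc[OF t])
  also have "\<dots> \<le> (\<integral>\<^sup>+x. ennreal golden * (if tau t \<le> x then ennreal x else G (Suc t)) \<partial>M t)"
  proof (rule nn_integral_mono_AE)
    show "AE x in M t. max (ennreal x) (V (Suc t)) \<le> ennreal golden * (if tau t \<le> x then ennreal x else G (Suc t))"
      using nonneg[OF t]
    proof eventually_elim
      fix x :: real assume x0: "0 \<le> x"
      show "max (ennreal x) (V (Suc t)) \<le> ennreal golden * (if tau t \<le> x then ennreal x else G (Suc t))"
      proof (cases "tau t \<le> x")
        case True
        have e: "ennreal golden * ennreal x = ennreal (golden * x)"
          using golden_pos x0 by (simp add: ennreal_mult)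
        have "x \<le> golden * x" using golden_ge1 x0 by (simp add: mult_le_cancel_right1)
        then have 1: "ennreal x \<le> ennreal (golden * x)" by (rule ennreal_leI)
        have "Y t \<le> golden * tau t" by (rule Y_le_tau)
        also have "\<dots> \<le> golden * x" using True golden_pos by simp
        finally have "ennreal (Y t) \<le> ennreal (golden * x)" by (rule ennreal_leI)
        then have 2: "V (Suc t) \<le> ennreal (golden * x)" using F3 by simp
        show ?thesis using True 1 2 e by simp
      next
        case False
        have "ennreal x \<le> ennreal (golden * be t)"
          using False tau_le[of t] by (intro ennreal_leI) simp
        also have "\<dots> = ennreal golden * ennreal (be t)"
          using golden_pos be_prop(1)[of t] by (simp add: ennreal_mult)
        also have "\<dots> \<le> ennreal golden * G (Suc t)" using L by (rule mult_left_mono) simp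
        finally show ?thesis using False IH by simp
      qed
    qed
  qed
  also have "\<dots> = ennreal golden * G t"
    using hm by (simp add: nn_integral_cmult G_rec[OF t])
  finally show ?case .
qed


end

theorem theorem3p1:
  fixes n :: nat and F :: "nat \<Rightarrow> real measure" and \<pi> :: "nat \<Rightarrow> nat"
  assumes "\<And>i. i < n \<Longrightarrow> prob_space (F i)"
    and "\<And>i. i < n \<Longrightarrow> sets (F i) = sets borel"
    and "\<And>i. i < n \<Longrightarrow> AE x in F i. 0 \<le> x"
    and "\<And>i. i < n \<Longrightarrow> integrable (F i) (\<lambda>x. x)"
    and "bij_betw \<pi> {..<n} {..<n}"
  shows "ennreal (1 / golden) * OPT n F \<pi> \<le> ALG n F \<pi>"
proof -
  define M' where "M' i = (if i < n then F (\<pi> i) else return borel 0)" for i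
  have pin: "\<pi> i < n" if "i < n" for i using bij_betwE[OF assms(5)] that by auto
  have probM: "prob_space (M' i)" for i
    unfolding M'_def using assms(1) pin by (auto intro: prob_space_return)
  have arr: "arrival_space n F \<pi> = PiM {..<n} M'"
    unfolding arrival_space_def by (rule PiM_cong) (auto simp: M'_def)
  have sM: "sets (M' i) = sets borel" if "i < n" for i using assms(2) pin that by (simp add: M'_def)
  have Me: "M' i = F (\<pi> i)" if "i < n" for i using that by (simp add: M'_def)
  have nM: "AE x in M' i. 0 \<le> x" if "i < n" for i unfolding Me[OF that] by (rule assms(3)[OF pin[OF that]])
  have iM: "integrable (M' i) (\<lambda>x. x)" if "i < n" for i unfolding Me[OF that] by (rule assms(4)[OF pin[OF that]])
  have "PS M' n"
    unfolding PS_def PS_axioms_def product_prob_space_def product_prob_space_axioms_def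
      product_sigma_finite_def
    using probM sM nM iM prob_space_imp_sigma_finite[OF probM] by blast
  then interpret Q: PS M' n .
  have rule_eq: "ALG_rule n F \<pi> = PS.A M' n"
    by (intro ext) (simp add: ALG_rule_def PS.A_def[OF Q.PS_axioms] PS.tau_def[OF Q.PS_axioms]
        PS.Y_def[OF Q.PS_axioms] PS.be_def[OF Q.PS_axioms] alpha_thr_def beta_thr_def arr)
  have alg: "ALG n F \<pi> = PS.G M' n 0"
    unfolding ALG_def expected_value_def rule_eq arr PS.G_def[OF Q.PS_axioms]
    by (simp add: Q.stop_sv)
  have opt: "OPT n F \<pi> \<le> PS.V M' n 0"
    unfolding OPT_def arr expected_value_def
    by (rule SUP_least) (simp add: Q.OPT_le_V)
  have "ennreal (1 / golden) * OPT n F \<pi> \<le> ennreal (1 / golden) * (ennreal golden * PS.G M' n 0)"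
    using opt Q.main[of 0] by (intro mult_left_mono) auto
  also have "\<dots> = PS.G M' n 0"
  proof -
    have "ennreal (1 / golden) * ennreal golden = 1"
      using golden_pos by (simp add: ennreal_mult[symmetric])
    then show ?thesis by (simp add: mult.assoc[symmetric])
  qed
  finally show ?thesis by (simp add: alg)
qed

end
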